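(* Let $\hat{\mathcal H}$ be a graph on vertex set $[n]$ with at least one edge that is partially shifted and triangle-free. Then there exist disjoint nonempty sets $X,Y\subset[n]$ with $X\cup Y=[|X|+|Y|]$ such that the edge set of $\hat{\mathcal H}$ is exactly $\{\{x,y\}:x\in X,\ y\in Y\}$.
   Context: A graph $\hat{\mathcal H}$ on $[n]$ is partially shifted if for all distinct $i,j,x\in[n]$ with $x<j$: if $\{i,j\}$ is an edge and $\{x,j\}$ is not an edge, then $\{i,x\}$ is an edge. *)

theory Defs
  imports Main
begin

definition graph_on :: "nat \<Rightarrow> nat set set \<Rightarrow> bool" where
  "graph_on n E \<longleftrightarrow> (\<forall>e\<in>E. e \<subseteq> {1..n} \<and> card e = 2)"

definition partially_shifted :: "nat \<Rightarrow> nat set set \<Rightarrow> bool" where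
  "partially_shifted n E \<longleftrightarrow>
     (\<forall>i\<in>{1..n}. \<forall>j\<in>{1..n}. \<forall>x\<in>{1..n}.
        i \<noteq> j \<and> i \<noteq> x \<and> x \<noteq> j \<and> x < j \<and> {i, j} \<in> E \<and> {x, j} \<notin> E
        \<longrightarrow> {i, x} \<in> E)"

definition triangle_free :: "nat set set \<Rightarrow> bool" where
  "triangle_free E \<longleftrightarrow> \<not> (\<exists>a b c. {a, b} \<in> E \<and> {b, c} \<in> E \<and> {a, c} \<in> E)"

end

theory Submission
  imports Defs
begin

theorem lemma1p2:
  fixes n :: nat and E :: "nat set set"
  assumes "graph_on n E"
    and "E \<noteq> {}"
    and "partially_shifted n E"
    and "triangle_free E"
  shows "\<exists>X Y. X \<noteq> {} \<and> Y \<noteq> {} \<and> X \<inter> Y = {} \<and> X \<subseteq> {1..n} \<and> Y \<subseteq> {1..n}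
           \<and> X \<union> Y = {1..card X + card Y}
           \<and> E = {{x, y} | x y. x \<in> X \<and> y \<in> Y}"
proof -
  define A where "A u v = ({u,v} \<in> E)" for u v
  have sym: "A v u" if "A u v" for u v using that unfolding A_def by (simp add: insert_commute)
  have two: "\<exists>u v. u \<noteq> v \<and> e = {u,v}" if "e \<in> E" for e
  proof -
    have "card e = 2" using assms(1) that unfolding graph_on_def by blast
    then obtain u v where "e = {u,v}" "u \<noteq> v" unfolding card_2_iff by blast
    then show ?thesis by blast
  qed
  have vert: "u \<in> {1..n} \<and> v \<in> {1..n} \<and> u \<noteq> v" if "A u v" for u v
  proof -
    have "{u,v} \<subseteq> {1..n}" "card {u,v} = 2" using assms(1) that unfolding graph_on_def A_def by auto
    then show ?thesis by (cases "u = v") auto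
  qed
  have sh: "A i x" if "A i j" "x \<in> {1..n}" "x \<noteq> i" "x \<noteq> j" "x < j" "\<not> A x j" for i j x
  proof -
    have "i \<in> {1..n}" "j \<in> {1..n}" "i \<noteq> j" using vert[OF that(1)] by auto
    then show ?thesis using assms(3) that unfolding partially_shifted_def A_def by metis
  qed
  have tri: "\<not> (A a b \<and> A b c \<and> A a c)" for a b c
    using assms(4) unfolding triangle_free_def A_def by blast
  define N where "N = {v. \<exists>u. A u v}"
  have Nn: "N \<subseteq> {1..n}" unfolding N_def using vert by blast
  have K: "A x i \<or> A x j" if ij: "A i j" and xN: "x \<in> N" "x \<noteq> i" "x \<noteq> j" for i j x
  proof (rule ccontr)
    assume c: "\<not> (A x i \<or> A x j)"
    have c1: "\<not> A x i" "\<not> A x j" "\<not> A i x" "\<not> A j x" using c sym by blast+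
    have xn: "x \<in> {1..n}" using xN Nn by blast
    have ji: "A j i" using ij sym by blast
    show False
    proof (cases "x < j")
      case True then show ?thesis using sh[OF ij xn xN(2,3)] c1 by blast
    next
      case F1: False
      show ?thesis
      proof (cases "x < i")
        case True then show ?thesis using sh[OF ji xn xN(3,2)] c1 by blast
      next
        case False
        with F1 xN have lt: "i < x" "j < x" by auto
        obtain y where y: "A y x" using xN(1) N_def by blast
        have yi: "y \<noteq> i" "y \<noteq> j" using y c1 by auto
        have ii: "i \<in> {1..n}" "j \<in> {1..n}" "i \<noteq> x" "j \<noteq> x" using vert[OF ij] lt by auto
        have "A y i" using sh[OF y ii(1) yi(1)[symmetric] ii(3) lt(1)] c1 by blast
        moreover have "A y j" using sh[OF y ii(2) yi(2)[symmetric] ii(4) lt(2)] c1 by blast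
        ultimately show ?thesis using tri[of i j y] ij sym by blast
      qed
    qed
  qed
  obtain e where e: "e \<in> E" using assms(2) by blast
  then obtain a b where ab0: "a \<noteq> b" "e = {a,b}" using two by blast
  have ab: "A a b" using ab0 e A_def by simp
  have finN: "finite N" using Nn finite_subset by blast
  have aN: "b \<in> N" using ab N_def by blast
  define m where "m = Max N"
  have mN: "m \<in> N" using finN aN m_def Max_in by blast
  have N_eq: "N = {1..m}"
  proof
    show "N \<subseteq> {1..m}" using Nn finN m_def by auto
    show "{1..m} \<subseteq> N"
    proof
      fix x assume x: "x \<in> {1..m}"
      obtain i where i: "A i m" using mN N_def by blast
      have "m \<le> n" using mN Nn by auto
      then have xn: "x \<in> {1..n}" using x by auto
      show "x \<in> N"
      proof (cases "x = m \<or> x = i")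
        case True then show ?thesis using mN i sym N_def by blast
      next
        case False
        then have xm: "x < m" using x by auto
        show ?thesis
        proof (cases "A x m")
          case True then show ?thesis using sym N_def by blast
        next
          case False
          then have "A i x" using sh[OF i xn] xm \<open>\<not> (x = m \<or> x = i)\<close> by blast
          then show ?thesis using N_def by blast
        qed
      qed
    qed
  qed
  define X where "X = {x. A x b}"
  define Y where "Y = {y. A y a}"
  have XN: "X \<subseteq> N" "Y \<subseteq> N" unfolding X_def Y_def N_def using sym by blast+
  have disj: "X \<inter> Y = {}" unfolding X_def Y_def using tri ab sym by blast
  have XY: "X \<union> Y = N"
  proof
    show "X \<union> Y \<subseteq> N" using XN by blast
    show "N \<subseteq> X \<union> Y"
    proof
      fix x assume x: "x \<in> N"
      show "x \<in> X \<union> Y"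
      proof (cases "x = a \<or> x = b")
        case True then show ?thesis using ab sym X_def Y_def by auto
      next
        case False then show ?thesis using K[OF ab x] X_def Y_def by auto
      qed
    qed
  qed
  have cardm: "card X + card Y = m"
  proof -
    have "finite X" "finite Y" using XN finN finite_subset by blast+
    then have "card (X \<union> Y) = card X + card Y" using disj card_Un_disjoint by blast
    then show ?thesis using XY N_eq by simp
  qed
  have Eeq: "E = {{x, y} | x y. x \<in> X \<and> y \<in> Y}"
  proof
    show "E \<subseteq> {{x, y} | x y. x \<in> X \<and> y \<in> Y}"
    proof
      fix e assume e: "e \<in> E"
      then obtain u v where uv: "u \<noteq> v" "e = {u,v}" using two by blast
      have uvE: "A u v" using e uv A_def by simp
      have "u \<in> N" "v \<in> N" using uvE sym N_def by blast+
      then have "u \<in> X \<union> Y" "v \<in> X \<union> Y" using XY by auto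
      moreover have "\<not> (u \<in> X \<and> v \<in> X)" using tri[of u v b] uvE X_def by auto
      moreover have "\<not> (u \<in> Y \<and> v \<in> Y)" using tri[of u v a] uvE Y_def by auto
      ultimately have "(u \<in> X \<and> v \<in> Y) \<or> (v \<in> X \<and> u \<in> Y)" by blast
      then show "e \<in> {{x, y} | x y. x \<in> X \<and> y \<in> Y}"
      proof
        assume "u \<in> X \<and> v \<in> Y" then show ?thesis using uv by blast
      next
        assume h: "v \<in> X \<and> u \<in> Y"
        have "e = {v,u}" using uv by (simp add: insert_commute)
        then show ?thesis using h by blast
      qed
    qed
    show "{{x, y} | x y. x \<in> X \<and> y \<in> Y} \<subseteq> E"
    proof
      fix e assume "e \<in> {{x, y} | x y. x \<in> X \<and> y \<in> Y}"
      then obtain x y where xy: "x \<in> X" "y \<in> Y" "e = {x,y}" by blast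
      have xb: "A x b" using xy X_def by simp
      have ya: "A y a" using xy Y_def by simp
      have "A x y"
      proof (cases "y = b")
        case True then show ?thesis using xb by simp
      next
        case False
        have "y \<in> N" using xy XN by blast
        moreover have "y \<noteq> x" using xy disj by blast
        moreover have "\<not> A y b" using tri[of a y b] ya ab sym by blast
        ultimately show ?thesis using K[OF xb] False sym by blast
      qed
      then show "e \<in> E" using xy A_def by simp
    qed
  qed
  have ne: "X \<noteq> {}" "Y \<noteq> {}" using ab sym X_def Y_def by blast+
  show ?thesis
    using ne disj XN Nn XY N_eq cardm Eeq by (intro exI[of _ X] exI[of _ Y]) auto
qed

end
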